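(* Let $\mathcal{H}$ be a real or complex Hilbert space and let $S:\mathcal{H}\to\mathcal{H}$ be a (not necessarily densely defined) linear operator such that $\operatorname{ran}(S\cap S^* )=\mathcal{H}$. Then $S$ is densely defined and self-adjoint.
   Context: Operators are identified with their graphs. For a linear relation $R\subset\mathcal{H}\times\mathcal{H}$ its adjoint is the linear relation $R^*=\{(k',h'):\langle k,k'\rangle=\langle h,h'\rangle\ \forall (h,k)\in R\}$ (possibly multivalued when $R$ is not densely defined). $S\cap S^*$ is the intersection of the graph of $S$ with $S^*$, and $\operatorname{ran}$ denotes its range (set of second coordinates). *)

theory Defs
  imports "HOL-Analysis.Analysis"
begin

class complex_vector_space = real_vector +
  fixes scaleC :: "complex \<Rightarrow> 'a \<Rightarrow> 'a"
  assumes scaleC_add_right: "scaleC a (x + y) = scaleC a x + scaleC a y"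
    and scaleC_add_left: "scaleC (a + b) x = scaleC a x + scaleC b x"
    and scaleC_scaleC: "scaleC a (scaleC b x) = scaleC (a * b) x"
    and scaleC_one: "scaleC 1 x = x"
    and scaleR_scaleC: "scaleR r x = scaleC (complex_of_real r) x"

class complex_inner_space = complex_vector_space + real_normed_vector +
  fixes cinner :: "'a \<Rightarrow> 'a \<Rightarrow> complex"
  assumes cinner_commute: "cinner x y = cnj (cinner y x)"
    and cinner_add_left: "cinner (x + y) z = cinner x z + cinner y z"
    and cinner_scaleC_left: "cinner (scaleC r x) y = cnj r * cinner x y"
    and cinner_self_norm: "cinner x x = complex_of_real ((norm x)\<^sup>2)"

text \<open>A (not necessarily densely defined) linear operator, identified with its graph:
  a linear subspace of H x H that is single-valued.\<close>

definition real_linear_operator :: "('a::real_vector \<times> 'a) set \<Rightarrow> bool" where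
  "real_linear_operator S \<longleftrightarrow>
     (0, 0) \<in> S \<and>
     (\<forall>x y u v. (x, y) \<in> S \<longrightarrow> (u, v) \<in> S \<longrightarrow> (x + u, y + v) \<in> S) \<and>
     (\<forall>c x y. (x, y) \<in> S \<longrightarrow> (scaleR c x, scaleR c y) \<in> S) \<and>
     (\<forall>x y z. (x, y) \<in> S \<longrightarrow> (x, z) \<in> S \<longrightarrow> y = z)"

definition complex_linear_operator :: "('a::complex_vector_space \<times> 'a) set \<Rightarrow> bool" where
  "complex_linear_operator S \<longleftrightarrow>
     (0, 0) \<in> S \<and>
     (\<forall>x y u v. (x, y) \<in> S \<longrightarrow> (u, v) \<in> S \<longrightarrow> (x + u, y + v) \<in> S) \<and>
     (\<forall>c x y. (x, y) \<in> S \<longrightarrow> (scaleC c x, scaleC c y) \<in> S) \<and>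
     (\<forall>x y z. (x, y) \<in> S \<longrightarrow> (x, z) \<in> S \<longrightarrow> y = z)"

definition real_adjoint :: "('a::real_inner \<times> 'a) set \<Rightarrow> ('a \<times> 'a) set" where
  "real_adjoint R = {(k', h'). \<forall>(h, k) \<in> R. inner k k' = inner h h'}"

definition complex_adjoint :: "('a::complex_inner_space \<times> 'a) set \<Rightarrow> ('a \<times> 'a) set" where
  "complex_adjoint R = {(k', h'). \<forall>(h, k) \<in> R. cinner k k' = cinner h h'}"

end

theory Submission imports Defs begin
lemma nearest_point:
  fixes y :: "'a::{real_normed_vector, complete_space}" and C :: "'a set"
  assumes par: "\<And>u v::'a. (norm (u+v))\<^sup>2 + (norm (u-v))\<^sup>2 = 2*(norm u)\<^sup>2 + 2*(norm v)\<^sup>2"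
    and cl: "closed C" and ne: "C \<noteq> {}" and cv: "convex C"
  shows "\<exists>p\<in>C. \<forall>m\<in>C. norm (y-p) \<le> norm (y-m)"
proof -
  define D where "D = (\<lambda>m. norm (y-m)) ` C"
  define d where "d = Inf D"
  have bdd: "bdd_below D" unfolding D_def by (rule bdd_belowI[of _ 0]) auto
  have Dne: "D \<noteq> {}" using ne unfolding D_def by auto
  have d0: "d \<ge> 0" unfolding d_def using Dne by (intro cInf_greatest) (auto simp: D_def)
  have dle: "d \<le> norm (y-m)" if "m \<in> C" for m
    unfolding d_def D_def using bdd that by (intro cInf_lower) (auto simp: D_def)
  have "\<exists>m\<in>C. (norm (y-m))\<^sup>2 < d\<^sup>2 + inverse (real (Suc n))" for n
  proof -
    have "d < sqrt (d\<^sup>2 + inverse (real (Suc n)))"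
    proof -
      have "sqrt (d\<^sup>2) < sqrt (d\<^sup>2 + inverse (real (Suc n)))" by (subst real_sqrt_less_iff) simp
      then show ?thesis using d0 by simp
    qed
    then obtain x where "x \<in> D" "x < sqrt (d\<^sup>2 + inverse (real (Suc n)))"
      using cInf_lessD[OF Dne] d_def by blast
    then obtain m where m: "m \<in> C" "norm (y-m) < sqrt (d\<^sup>2 + inverse (real (Suc n)))"
      unfolding D_def by auto
    then have "(norm (y-m))\<^sup>2 < d\<^sup>2 + inverse (real (Suc n))"
      by (metis norm_ge_zero real_sqrt_less_iff real_sqrt_abs abs_of_nonneg)
    with m show ?thesis by blast
  qed
  then obtain f where f: "\<And>n. f n \<in> C" "\<And>n. (norm (y - f n))\<^sup>2 < d\<^sup>2 + inverse (real (Suc n))"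
    by metis
  have key: "(norm (f a - f b))\<^sup>2 \<le> 2*inverse (real (Suc a)) + 2*inverse (real (Suc b))" for a b
  proof -
    let ?u = "y - f a" and ?v = "y - f b"
    have mid: "(1/2) *\<^sub>R (f a + f b) \<in> C"
      using convexD[OF cv f(1)[of a] f(1)[of b], of "1/2" "1/2"] by (simp add: scaleR_add_right)
    have "?u + ?v = 2 *\<^sub>R (y - (1/2) *\<^sub>R (f a + f b))" by (simp add: algebra_simps scaleR_2)
    then have "norm (?u + ?v) = 2 * norm (y - (1/2) *\<^sub>R (f a + f b))" by simp
    then have "norm (?u + ?v) \<ge> 2*d" using dle[OF mid] by simp
    then have h1: "(norm (?u + ?v))\<^sup>2 \<ge> 4*d\<^sup>2" using d0 power_mono[of "2*d" "norm (?u + ?v)" 2]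
      by (simp add: power_mult_distrib)
    have "?u - ?v = f b - f a" by simp
    then have "(norm (f a - f b))\<^sup>2 = 2*(norm ?u)\<^sup>2 + 2*(norm ?v)\<^sup>2 - (norm (?u + ?v))\<^sup>2"
      using par[of ?u ?v] by (simp add: norm_minus_commute)
    then show ?thesis using h1 f(2)[of a] f(2)[of b] by linarith
  qed
  have cau: "Cauchy f"
  proof (rule CauchyI)
    fix e :: real assume e: "0 < e"
    obtain N where N: "inverse (real (Suc N)) < e\<^sup>2 / 4"
      using reals_Archimedean e by (metis zero_less_divide_iff zero_less_numeral zero_less_power)
    have "norm (f m - f n) < e" if "m \<ge> N" "n \<ge> N" for m n
    proof -
      have "inverse (real (Suc m)) \<le> inverse (real (Suc N))" "inverse (real (Suc n)) \<le> inverse (real (Suc N))"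
        using that by (auto intro!: le_imp_inverse_le)
      then have "(norm (f m - f n))\<^sup>2 < e\<^sup>2" using key[of m n] N by linarith
      then show ?thesis using e by (simp add: power_less_imp_less_base)
    qed
    then show "\<exists>M. \<forall>m\<ge>M. \<forall>n\<ge>M. norm (f m - f n) < e" by blast
  qed
  then obtain p where p: "f \<longlonglongrightarrow> p" using Cauchy_convergent_iff convergent_def by blast
  have pC: "p \<in> C" using cl closed_sequentially f(1) p by blast
  have "norm (y-p) \<le> norm (y-m)" if m: "m \<in> C" for m
  proof -
    have l1: "(\<lambda>n. (norm (y - f n))\<^sup>2) \<longlonglongrightarrow> (norm (y-p))\<^sup>2"
      by (intro tendsto_intros p)
    have l2: "(\<lambda>n. (norm (y - m))\<^sup>2 + inverse (real (Suc n))) \<longlonglongrightarrow> (norm (y-m))\<^sup>2 + 0"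
      by (intro tendsto_intros LIMSEQ_inverse_real_of_nat)
    have "(norm (y-p))\<^sup>2 \<le> (norm (y-m))\<^sup>2 + 0"
    proof (rule LIMSEQ_le[OF l1 l2], intro exI allI impI)
      fix n
      have "d\<^sup>2 \<le> (norm (y-m))\<^sup>2" using dle[OF m] d0 by (simp add: power_mono)
      then show "(norm (y - f n))\<^sup>2 \<le> (norm (y - m))\<^sup>2 + inverse (real (Suc n))"
        using f(2)[of n] by linarith
    qed
    then show ?thesis by (simp add: power_mono_iff)
  qed
  with pC show ?thesis by blast
qed

lemma perp_exists:
  fixes M :: "'a::{real_normed_vector, complete_space} set"
  assumes par: "\<And>u v::'a. (norm (u+v))\<^sup>2 + (norm (u-v))\<^sup>2 = 2*(norm u)\<^sup>2 + 2*(norm v)\<^sup>2"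
    and sub: "subspace M" and nd: "closure M \<noteq> UNIV"
  shows "\<exists>z. z \<noteq> 0 \<and> (\<forall>m\<in>M. \<forall>t::real. norm z \<le> norm (z - t *\<^sub>R m))"
proof -
  obtain y where y: "y \<notin> closure M" using nd by blast
  have ne: "closure M \<noteq> {}" using subspace_0[OF sub] closure_subset[of M] by auto
  have cv: "convex (closure M)" by (rule convex_closure[OF subspace_imp_convex[OF sub]])
  obtain p where p: "p \<in> closure M" "\<And>m. m \<in> closure M \<Longrightarrow> norm (y-p) \<le> norm (y-m)"
    using nearest_point[OF par closed_closure ne cv, of y] by blast
  have "y - p \<noteq> 0" using p y by auto
  moreover have "norm (y-p) \<le> norm ((y-p) - t *\<^sub>R m)" if m: "m \<in> M" for m t
  proof -
    obtain f where f: "\<And>n. f n \<in> M" "f \<longlonglongrightarrow> p" using p(1) unfolding closure_sequential by blast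
    have "(\<lambda>n. f n + t *\<^sub>R m) \<longlonglongrightarrow> p + t *\<^sub>R m" by (intro tendsto_intros f)
    moreover have "f n + t *\<^sub>R m \<in> M" for n using sub f(1) m by (simp add: subspace_add subspace_scale)
    ultimately have "p + t *\<^sub>R m \<in> closure M" unfolding closure_sequential by (intro exI[of _ "\<lambda>n. f n + t *\<^sub>R m"]) blast
    from p(2)[OF this] show ?thesis by (simp add: algebra_simps)
  qed
  ultimately show ?thesis by blast
qed

lemma quad_zero:
  fixes c q :: real
  assumes "\<And>t. 2*t*c \<le> t\<^sup>2 * q" "q \<ge> 0"
  shows "c = 0"
proof -
  define a where "a = q + 1"
  have a: "a > 0" using assms(2) by (simp add: a_def)
  have "2*(c/a)*c \<le> (c/a)\<^sup>2 * q" using assms(1) .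
  then have "2*(c/a)*c * a\<^sup>2 \<le> (c/a)\<^sup>2 * q * a\<^sup>2" by (rule mult_right_mono) simp_all
  also have "(c/a)\<^sup>2 * q * a\<^sup>2 = c*c*q" using a by (simp add: power2_eq_square field_simps)
  also have "2*(c/a)*c * a\<^sup>2 = 2*c*c*a" using a by (simp add: power2_eq_square field_simps)
  finally have "2*c*c*a \<le> c*c*q" .
  then have "c*c*(q+2) \<le> 0" by (simp add: a_def algebra_simps)
  moreover have "c*c \<ge> 0" by simp
  ultimately have "c*c = 0" using assms(2)
    by (metis add_nonneg_pos antisym mult_le_0_iff not_le zero_less_numeral)
  then show ?thesis by simp
qed

lemma real_perp:
  fixes z m :: "'a::real_inner"
  assumes "\<And>t::real. norm z \<le> norm (z - t *\<^sub>R m)"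
  shows "inner m z = 0"
proof (rule quad_zero)
  fix t :: real
  have "(norm z)\<^sup>2 \<le> (norm (z - t *\<^sub>R m))\<^sup>2" using assms[of t] by (simp add: power_mono)
  also have "\<dots> = inner (z - t *\<^sub>R m) (z - t *\<^sub>R m)" by (simp add: power2_norm_eq_inner)
  also have "\<dots> = inner z z - 2*t*inner m z + t\<^sup>2 * inner m m"
    by (simp add: inner_diff_left inner_diff_right inner_commute power2_eq_square algebra_simps)
  also have "\<dots> = (norm z)\<^sup>2 - 2*t*inner m z + t\<^sup>2 * (norm m)\<^sup>2"
    by (simp add: power2_norm_eq_inner)
  finally show "2*t*inner m z \<le> t\<^sup>2 * (norm m)\<^sup>2" by simp
qed simp

lemma real_par:
  fixes u v :: "'a::real_inner"
  shows "(norm (u+v))\<^sup>2 + (norm (u-v))\<^sup>2 = 2*(norm u)\<^sup>2 + 2*(norm v)\<^sup>2"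
  by (simp add: power2_norm_eq_inner inner_add_left inner_add_right inner_diff_left inner_diff_right inner_commute algebra_simps)


lemma real_dom_subspace:
  fixes S :: "('a::real_inner \<times> 'a) set"
  assumes "real_linear_operator S"
  shows "subspace (Domain S)"
  unfolding subspace_def
proof (intro conjI ballI allI)
  show "0 \<in> Domain S" using assms unfolding real_linear_operator_def by (meson DomainI)
next
  fix x y assume "x \<in> Domain S" "y \<in> Domain S"
  then obtain a b where "(x,a) \<in> S" "(y,b) \<in> S" by blast
  then show "x + y \<in> Domain S" using assms unfolding real_linear_operator_def by (meson DomainI)
next
  fix c :: real and x assume "x \<in> Domain S"
  then obtain a where "(x,a) \<in> S" by blast
  then show "c *\<^sub>R x \<in> Domain S" using assms unfolding real_linear_operator_def by (meson DomainI)
qed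

lemma real_part:
  fixes S :: "('a::{real_inner, complete_space} \<times> 'a) set"
  assumes L: "real_linear_operator S" and R: "Range (S \<inter> real_adjoint S) = UNIV"
  shows "closure (Domain S) = UNIV \<and> real_adjoint S = S"
proof -
  have zero: "(0,0) \<in> S" and add: "\<And>x y u v. (x, y) \<in> S \<Longrightarrow> (u, v) \<in> S \<Longrightarrow> (x + u, y + v) \<in> S"
    and sc: "\<And>c x y. (x, y) \<in> S \<Longrightarrow> (scaleR c x, scaleR c y) \<in> S"
    and sv: "\<And>x y z. (x, y) \<in> S \<Longrightarrow> (x, z) \<in> S \<Longrightarrow> y = z"
    using L unfolding real_linear_operator_def by blast+
  have T: "\<exists>a. (a,b) \<in> S \<and> (\<forall>(h, k) \<in> S. inner k a = inner h b)" for b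
  proof -
    have "b \<in> Range (S \<inter> real_adjoint S)" using R by simp
    then obtain a where "(a,b) \<in> S" "(a,b) \<in> real_adjoint S" by blast
    then show ?thesis unfolding real_adjoint_def by blast
  qed
  have inj: "w = 0" if "(w,0) \<in> S" for w
  proof -
    obtain a where "(\<forall>(h, k) \<in> S. inner k a = inner h w)" using T[of w] by blast
    with that have "inner w w = 0" by auto
    then show ?thesis by simp
  qed
  have sub: "(x - u, y - v) \<in> S" if "(x,y) \<in> S" "(u,v) \<in> S" for x y u v
    using add[OF that(1) sc[OF that(2), of "-1"]] by simp
  have S1: "S \<subseteq> real_adjoint S"
  proof
    fix p assume p: "p \<in> S"
    obtain x y where xy: "p = (x,y)" by fastforce
    obtain u where u: "(u,y) \<in> S" "\<forall>(h, k) \<in> S. inner k u = inner h y" using T[of y] by blast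
    have "(x - u, 0) \<in> S" using sub[OF p[unfolded xy] u(1)] by simp
    then have "x - u = 0" by (rule inj)
    then show "p \<in> real_adjoint S" using u(2) xy unfolding real_adjoint_def by auto
  qed
  have S2: "real_adjoint S \<subseteq> S"
  proof
    fix p assume p: "p \<in> real_adjoint S"
    obtain k' h' where xy: "p = (k',h')" by fastforce
    obtain u where u: "(u,h') \<in> S" "\<forall>(h, k) \<in> S. inner k u = inner h h'" using T[of h'] by blast
    have pk: "\<forall>(h, k) \<in> S. inner k k' = inner h h'" using p xy unfolding real_adjoint_def by auto
    have "inner k (k' - u) = 0" for k
    proof -
      obtain a where ak: "(a,k) \<in> S" using T[of k] by blast
      have e1: "inner k k' = inner a h'" using pk ak by fastforce
      have e2: "inner k u = inner a h'" using u(2) ak by fastforce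
      show ?thesis using e1 e2 by (simp add: inner_diff_right)
    qed
    from this[of "k' - u"] have "k' = u" by simp
    then show "p \<in> S" using u xy by simp
  qed
  have dense: "closure (Domain S) = UNIV"
  proof (rule ccontr)
    assume "closure (Domain S) \<noteq> UNIV"
    then obtain z where z: "z \<noteq> 0" "\<forall>m\<in>Domain S. \<forall>t::real. norm z \<le> norm (z - t *\<^sub>R m)"
      using perp_exists[OF real_par real_dom_subspace[OF L]] by blast
    have "inner m z = 0" if "m \<in> Domain S" for m using z(2) that by (intro real_perp) blast
    then have "(0, z) \<in> real_adjoint S" unfolding real_adjoint_def by auto
    then have "(0, z) \<in> S" using S2 by blast
    then show False using sv[OF zero] z(1) by blast
  qed
  show ?thesis using dense S1 S2 by blast
qed


lemma cinner_add_right: "cinner x (y + z) = cinner x y + cinner x z"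
  by (metis cinner_commute cinner_add_left complex_cnj_add)

lemma cinner_zero_left: "cinner 0 x = 0"
  using cinner_add_left[of 0 0 x] by simp

lemma cinner_zero_right: "cinner x 0 = 0"
  using cinner_add_right[of x 0 0] by simp

lemma neg_scaleC: "- x = scaleC (-1) x"
  using scaleR_scaleC[of "-1" x] by simp

lemma cinner_minus_left: "cinner (- x) y = - cinner x y"
  by (simp add: neg_scaleC cinner_scaleC_left)

lemma cinner_minus_right: "cinner x (- y) = - cinner x y"
  by (metis cinner_commute cinner_minus_left complex_cnj_minus)

lemma cinner_diff_left: "cinner (x - y) z = cinner x z - cinner y z"
  by (metis cinner_add_left cinner_minus_left diff_conv_add_uminus)

lemma cinner_diff_right: "cinner x (y - z) = cinner x y - cinner x z"
  by (metis cinner_add_right cinner_minus_right diff_conv_add_uminus)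

lemma cinner_scaleR_left: "cinner (scaleR t x) y = complex_of_real t * cinner x y"
  by (simp add: scaleR_scaleC cinner_scaleC_left)

lemma cinner_scaleC_right: "cinner x (scaleC r y) = r * cinner x y"
  by (metis cinner_commute cinner_scaleC_left complex_cnj_cnj complex_cnj_mult)

lemma cinner_scaleR_right: "cinner x (scaleR t y) = complex_of_real t * cinner x y"
  by (simp add: scaleR_scaleC cinner_scaleC_right)

lemma norm_sq_cinner: "(norm x)\<^sup>2 = Re (cinner x x)"
  by (simp add: cinner_self_norm)

lemma cinner_self_zero: "cinner x x = 0 \<Longrightarrow> x = 0"
  using cinner_self_norm[of x] by simp

lemma complex_par:
  fixes u v :: "'a::complex_inner_space"
  shows "(norm (u+v))\<^sup>2 + (norm (u-v))\<^sup>2 = 2*(norm u)\<^sup>2 + 2*(norm v)\<^sup>2"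
  by (simp add: norm_sq_cinner cinner_add_left cinner_add_right cinner_diff_left cinner_diff_right)

lemma complex_perp:
  fixes z m :: "'a::complex_inner_space"
  assumes "\<And>t::real. norm z \<le> norm (z - t *\<^sub>R m)"
  shows "Re (cinner m z) = 0"
proof (rule quad_zero)
  fix t :: real
  have "(norm z)\<^sup>2 \<le> (norm (z - t *\<^sub>R m))\<^sup>2" using assms[of t] by (simp add: power_mono)
  also have "\<dots> = Re (cinner (z - t *\<^sub>R m) (z - t *\<^sub>R m))" by (simp add: norm_sq_cinner)
  also have "\<dots> = Re (cinner z z) - t * Re (cinner m z) - t * Re (cinner z m) + t\<^sup>2 * Re (cinner m m)"
    by (simp add: cinner_diff_left cinner_diff_right cinner_scaleR_left cinner_scaleR_right power2_eq_square algebra_simps)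
  also have "Re (cinner z m) = Re (cinner m z)" by (subst cinner_commute) simp
  finally show "2*t*Re (cinner m z) \<le> t\<^sup>2 * (norm m)\<^sup>2" by (simp add: norm_sq_cinner)
qed simp

lemma complex_dom_subspace:
  fixes S :: "('a::complex_inner_space \<times> 'a) set"
  assumes "complex_linear_operator S"
  shows "subspace (Domain S)"
  unfolding subspace_def
proof (intro conjI ballI allI)
  show "0 \<in> Domain S" using assms unfolding complex_linear_operator_def by (meson DomainI)
next
  fix x y assume "x \<in> Domain S" "y \<in> Domain S"
  then obtain a b where "(x,a) \<in> S" "(y,b) \<in> S" by blast
  then show "x + y \<in> Domain S" using assms unfolding complex_linear_operator_def by (meson DomainI)
next
  fix c :: real and x assume "x \<in> Domain S"
  then obtain a where "(x,a) \<in> S" by blast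
  then show "c *\<^sub>R x \<in> Domain S" using assms unfolding complex_linear_operator_def scaleR_scaleC by (meson DomainI)
qed

lemma complex_part:
  fixes S :: "('a::{complex_inner_space, complete_space} \<times> 'a) set"
  assumes L: "complex_linear_operator S" and R: "Range (S \<inter> complex_adjoint S) = UNIV"
  shows "closure (Domain S) = UNIV \<and> complex_adjoint S = S"
proof -
  have zero: "(0,0) \<in> S" and add: "\<And>x y u v. (x, y) \<in> S \<Longrightarrow> (u, v) \<in> S \<Longrightarrow> (x + u, y + v) \<in> S"
    and sc: "\<And>c x y. (x, y) \<in> S \<Longrightarrow> (scaleC c x, scaleC c y) \<in> S"
    and sv: "\<And>x y z. (x, y) \<in> S \<Longrightarrow> (x, z) \<in> S \<Longrightarrow> y = z"
    using L unfolding complex_linear_operator_def by blast+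
  have T: "\<exists>a. (a,b) \<in> S \<and> (\<forall>(h, k) \<in> S. cinner k a = cinner h b)" for b
  proof -
    have "b \<in> Range (S \<inter> complex_adjoint S)" using R by simp
    then obtain a where "(a,b) \<in> S" "(a,b) \<in> complex_adjoint S" by blast
    then show ?thesis unfolding complex_adjoint_def by blast
  qed
  have inj: "w = 0" if "(w,0) \<in> S" for w
  proof -
    obtain a where "(\<forall>(h, k) \<in> S. cinner k a = cinner h w)" using T[of w] by blast
    with that have "cinner w w = 0" by (auto simp: cinner_zero_left)
    then show ?thesis by (rule cinner_self_zero)
  qed
  have sub: "(x - u, y - v) \<in> S" if "(x,y) \<in> S" "(u,v) \<in> S" for x y u v
    using add[OF that(1) sc[OF that(2), of "-1"]] by (simp flip: neg_scaleC)
  have S1: "S \<subseteq> complex_adjoint S"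
  proof
    fix p assume p: "p \<in> S"
    obtain x y where xy: "p = (x,y)" by fastforce
    obtain u where u: "(u,y) \<in> S" "\<forall>(h, k) \<in> S. cinner k u = cinner h y" using T[of y] by blast
    have "(x - u, 0) \<in> S" using sub[OF p[unfolded xy] u(1)] by simp
    then have "x - u = 0" by (rule inj)
    then show "p \<in> complex_adjoint S" using u(2) xy unfolding complex_adjoint_def by auto
  qed
  have S2: "complex_adjoint S \<subseteq> S"
  proof
    fix p assume p: "p \<in> complex_adjoint S"
    obtain k' h' where xy: "p = (k',h')" by fastforce
    obtain u where u: "(u,h') \<in> S" "\<forall>(h, k) \<in> S. cinner k u = cinner h h'" using T[of h'] by blast
    have pk: "\<forall>(h, k) \<in> S. cinner k k' = cinner h h'" using p xy unfolding complex_adjoint_def by auto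
    have "cinner k (k' - u) = 0" for k
    proof -
      obtain a where ak: "(a,k) \<in> S" using T[of k] by blast
      have e1: "cinner k k' = cinner a h'" using pk ak by fastforce
      have e2: "cinner k u = cinner a h'" using u(2) ak by fastforce
      show ?thesis using e1 e2 by (simp add: cinner_diff_right)
    qed
    from cinner_self_zero[OF this[of "k' - u"]] have "k' = u" by simp
    then show "p \<in> S" using u xy by simp
  qed
  have dense: "closure (Domain S) = UNIV"
  proof (rule ccontr)
    assume "closure (Domain S) \<noteq> UNIV"
    then obtain z where z: "z \<noteq> 0" "\<forall>m\<in>Domain S. \<forall>t::real. norm z \<le> norm (z - t *\<^sub>R m)"
      using perp_exists[OF complex_par complex_dom_subspace[OF L]] by blast
    have re: "Re (cinner m z) = 0" if "m \<in> Domain S" for m using z(2) that by (intro complex_perp) blast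
    have "cinner m z = 0" if m: "m \<in> Domain S" for m
    proof -
      obtain b where "(m,b) \<in> S" using m by blast
      then have "scaleC \<i> m \<in> Domain S" using sc by blast
      then have "Re (cinner (scaleC \<i> m) z) = 0" by (rule re)
      then have "Im (cinner m z) = 0" by (simp add: cinner_scaleC_left)
      then show ?thesis using re[OF m] by (simp add: complex_eq_iff)
    qed
    then have "(0, z) \<in> complex_adjoint S" unfolding complex_adjoint_def by (auto simp: cinner_zero_right)
    then have "(0, z) \<in> S" using S2 by blast
    then show False using sv[OF zero] z(1) by blast
  qed
  show ?thesis using dense S1 S2 by blast
qed

theorem corollary3p6:
  shows "(\<forall>S :: ('a::{real_inner, complete_space} \<times> 'a) set.
            real_linear_operator S \<and> Range (S \<inter> real_adjoint S) = UNIV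
            \<longrightarrow> closure (Domain S) = UNIV \<and> real_adjoint S = S)
       \<and> (\<forall>S :: ('b::{complex_inner_space, complete_space} \<times> 'b) set.
            complex_linear_operator S \<and> Range (S \<inter> complex_adjoint S) = UNIV
            \<longrightarrow> closure (Domain S) = UNIV \<and> complex_adjoint S = S)"
proof (rule conjI; intro allI impI)
  fix S :: "('a::{real_inner, complete_space} \<times> 'a) set"
  assume "real_linear_operator S \<and> Range (S \<inter> real_adjoint S) = UNIV"
  then show "closure (Domain S) = UNIV \<and> real_adjoint S = S" by (intro real_part) simp_all
next
  fix S :: "('b::{complex_inner_space, complete_space} \<times> 'b) set"
  assume "complex_linear_operator S \<and> Range (S \<inter> complex_adjoint S) = UNIV"
  then show "closure (Domain S) = UNIV \<and> complex_adjoint S = S" by (intro complex_part) simp_all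
qed

end
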